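(* Let $S$ be a finite $p$-group, $Q\le S$ a characteristic subgroup with $C_S(Q)=Z(Q)$, and $\mathcal{F}$ a saturated fusion system on $S$. Then restriction to $Q$ induces group isomorphisms $\mathrm{Aut}_{\mathcal{F}}(S)/\mathrm{Aut}_{Z(Q)}(S)\cong N_{\mathrm{Aut}_{\mathcal{F}}(Q)}(\mathrm{Aut}_S(Q))$ and $\mathrm{Aut}_{\mathcal{F}}(S)/\mathrm{Aut}_{Q}(S)\cong N_{\mathrm{Out}_{\mathcal{F}}(Q)}(\mathrm{Out}_S(Q))$.
   Context: For subgroups $X\le S$ and $P\le S$ with $X$ normalising $P$, $\mathrm{Aut}_X(P)$ denotes the group of automorphisms of $P$ induced by conjugation by elements of $X$; $\mathrm{Out}_{\mathcal{F}}(Q)=\mathrm{Aut}_{\mathcal{F}}(Q)/\mathrm{Inn}(Q)$ and $\mathrm{Out}_S(Q)$ is the image of $\mathrm{Aut}_S(Q)$ in it. *)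

theory Defs
  imports "HOL-Algebra.Algebra"
begin

text \<open>A fusion system is
represented by a function F giving, for each pair of subgroups P, Q of S, the set
Hom_F(P,Q) of morphisms P to Q.  Morphisms are functions extensional on their domain
(undefined outside P), as in HOL-Algebra's Bij / BijGroup.\<close>

definition conjm :: "'a monoid \<Rightarrow> 'a \<Rightarrow> 'a set \<Rightarrow> ('a \<Rightarrow> 'a)" where
  "conjm S g P = (\<lambda>x\<in>P. g \<otimes>\<^bsub>S\<^esub> x \<otimes>\<^bsub>S\<^esub> inv\<^bsub>S\<^esub> g)"

definition HomS :: "'a monoid \<Rightarrow> 'a set \<Rightarrow> 'a set \<Rightarrow> ('a \<Rightarrow> 'a) set" where
  "HomS S P Q = {conjm S g P | g. g \<in> carrier S \<and> (\<forall>x\<in>P. g \<otimes>\<^bsub>S\<^esub> x \<otimes>\<^bsub>S\<^esub> inv\<^bsub>S\<^esub> g \<in> Q)}"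

definition InjHom :: "'a monoid \<Rightarrow> 'a set \<Rightarrow> 'a set \<Rightarrow> ('a \<Rightarrow> 'a) set" where
  "InjHom S P Q = {\<phi>. \<phi> \<in> extensional P \<and> \<phi> \<in> hom (S\<lparr>carrier := P\<rparr>) (S\<lparr>carrier := Q\<rparr>)
                     \<and> inj_on \<phi> P}"

definition AutX :: "'a monoid \<Rightarrow> 'a set \<Rightarrow> 'a set \<Rightarrow> ('a \<Rightarrow> 'a) set" where
  "AutX S T P = {conjm S g P | g. g \<in> T}"

definition NS :: "'a monoid \<Rightarrow> 'a set \<Rightarrow> 'a set" where
  "NS S P = {g \<in> carrier S. (\<lambda>x. g \<otimes>\<^bsub>S\<^esub> x \<otimes>\<^bsub>S\<^esub> inv\<^bsub>S\<^esub> g) ` P = P}"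

definition CS :: "'a monoid \<Rightarrow> 'a set \<Rightarrow> 'a set" where
  "CS S P = {g \<in> carrier S. \<forall>x\<in>P. g \<otimes>\<^bsub>S\<^esub> x = x \<otimes>\<^bsub>S\<^esub> g}"

definition ZZ :: "'a monoid \<Rightarrow> 'a set \<Rightarrow> 'a set" where
  "ZZ S P = {z \<in> P. \<forall>x\<in>P. z \<otimes>\<^bsub>S\<^esub> x = x \<otimes>\<^bsub>S\<^esub> z}"

text \<open>Fusion system on S (Broto-Levi-Oliver / Aschbacher-Kessar-Oliver, Def. I.2.1): a category
whose objects are the subgroups of S, with Hom_S(P,Q) contained in Hom_F(P,Q) contained in Inj(P,Q),
closed under composition (identities are in Hom_S), and such that every morphism is the composite
of an F-isomorphism onto its image followed by an inclusion.\<close>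
definition fusion_system :: "'a monoid \<Rightarrow> ('a set \<Rightarrow> 'a set \<Rightarrow> ('a \<Rightarrow> 'a) set) \<Rightarrow> bool" where
  "fusion_system S F \<longleftrightarrow>
     (\<forall>P Q. (subgroup P S \<and> subgroup Q S \<longrightarrow> HomS S P Q \<subseteq> F P Q \<and> F P Q \<subseteq> InjHom S P Q)
          \<and> (\<not> (subgroup P S \<and> subgroup Q S) \<longrightarrow> F P Q = {}))
   \<and> (\<forall>P Q R \<phi> \<psi>. \<phi> \<in> F P Q \<longrightarrow> \<psi> \<in> F Q R \<longrightarrow> compose P \<psi> \<phi> \<in> F P R)
   \<and> (\<forall>P Q \<phi>. \<phi> \<in> F P Q \<longrightarrow> \<phi> \<in> F P (\<phi> ` P) \<and> restrict (inv_into P \<phi>) (\<phi> ` P) \<in> F (\<phi> ` P) P)"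

definition AutFgrp :: "('a set \<Rightarrow> 'a set \<Rightarrow> ('a \<Rightarrow> 'a) set) \<Rightarrow> 'a set \<Rightarrow> ('a \<Rightarrow> 'a) monoid" where
  "AutFgrp F P = (BijGroup P)\<lparr>carrier := F P P\<rparr>"

definition Fconj :: "'a monoid \<Rightarrow> ('a set \<Rightarrow> 'a set \<Rightarrow> ('a \<Rightarrow> 'a) set) \<Rightarrow> 'a set \<Rightarrow> 'a set set" where
  "Fconj S F P = {\<phi> ` P | \<phi>. \<phi> \<in> F P (carrier S)}"

definition fully_normalized :: "'a monoid \<Rightarrow> ('a set \<Rightarrow> 'a set \<Rightarrow> ('a \<Rightarrow> 'a) set) \<Rightarrow> 'a set \<Rightarrow> bool" where
  "fully_normalized S F P \<longleftrightarrow> subgroup P S \<and> (\<forall>P' \<in> Fconj S F P. card (NS S P') \<le> card (NS S P))"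

definition fully_centralized :: "'a monoid \<Rightarrow> ('a set \<Rightarrow> 'a set \<Rightarrow> ('a \<Rightarrow> 'a) set) \<Rightarrow> 'a set \<Rightarrow> bool" where
  "fully_centralized S F P \<longleftrightarrow> subgroup P S \<and> (\<forall>P' \<in> Fconj S F P. card (CS S P') \<le> card (CS S P))"

definition sylow_in :: "nat \<Rightarrow> 'c set \<Rightarrow> ('c, 'd) monoid_scheme \<Rightarrow> bool" where
  "sylow_in p H G \<longleftrightarrow> subgroup H G \<and> (\<exists>a. card H = p ^ a) \<and>
     (\<exists>m. card (carrier G) = card H * m \<and> \<not> p dvd m)"

text \<open>N_phi = {g in N_S(P) : phi c_g phi^-1 in Aut_S(phi(P))}.\<close>
definition Nphi :: "'a monoid \<Rightarrow> 'a set \<Rightarrow> ('a \<Rightarrow> 'a) \<Rightarrow> 'a set" where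
  "Nphi S P \<phi> = {g \<in> NS S P. \<exists>h \<in> NS S (\<phi> ` P). \<forall>y \<in> \<phi> ` P.
       \<phi> (g \<otimes>\<^bsub>S\<^esub> inv_into P \<phi> y \<otimes>\<^bsub>S\<^esub> inv\<^bsub>S\<^esub> g) = h \<otimes>\<^bsub>S\<^esub> y \<otimes>\<^bsub>S\<^esub> inv\<^bsub>S\<^esub> h}"

text \<open>Saturated fusion system (AKO Def. I.2.2): (I) every fully normalized P is fully
centralized and Aut_S(P) is Sylow in Aut_F(P); (II) every phi in Hom_F(P,S) with phi(P) fully
centralized extends to a morphism in Hom_F(N_phi,S).\<close>
definition saturated :: "nat \<Rightarrow> 'a monoid \<Rightarrow> ('a set \<Rightarrow> 'a set \<Rightarrow> ('a \<Rightarrow> 'a) set) \<Rightarrow> bool" where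
  "saturated p S F \<longleftrightarrow> fusion_system S F
   \<and> (\<forall>P. fully_normalized S F P \<longrightarrow>
          fully_centralized S F P \<and> sylow_in p (AutX S (NS S P) P) (AutFgrp F P))
   \<and> (\<forall>P \<phi>. \<phi> \<in> F P (carrier S) \<and> fully_centralized S F (\<phi> ` P) \<longrightarrow>
          (\<exists>\<psi> \<in> F (Nphi S P \<phi>) (carrier S). \<forall>x\<in>P. \<psi> x = \<phi> x))"

text \<open>Out_F(Q) = Aut_F(Q)/Inn(Q) and Out_S(Q) = image of Aut_S(Q) in Out_F(Q).\<close>
definition OutFgrp :: "'a monoid \<Rightarrow> ('a set \<Rightarrow> 'a set \<Rightarrow> ('a \<Rightarrow> 'a) set) \<Rightarrow> 'a set \<Rightarrow> ('a \<Rightarrow> 'a) set monoid" where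
  "OutFgrp S F Q = AutFgrp F Q Mod AutX S Q Q"

definition OutS :: "'a monoid \<Rightarrow> ('a set \<Rightarrow> 'a set \<Rightarrow> ('a \<Rightarrow> 'a) set) \<Rightarrow> 'a set \<Rightarrow> ('a \<Rightarrow> 'a) set set" where
  "OutS S F Q = (\<lambda>a. AutX S Q Q #>\<^bsub>AutFgrp F Q\<^esub> a) ` AutX S (carrier S) Q"

end

theory Submission
  imports Defs
begin

locale fsys =
  fixes G :: "'a monoid" (structure) and F :: "'a set \<Rightarrow> 'a set \<Rightarrow> ('a \<Rightarrow> 'a) set"
  assumes grp: "group G" and fin: "finite (carrier G)" and fs: "fusion_system G F"

sublocale fsys \<subseteq> group G by (rule grp)

context fsys begin

lemma fs_parts1:
  "\<forall>P Q. (subgroup P G \<and> subgroup Q G \<longrightarrow> HomS G P Q \<subseteq> F P Q \<and> F P Q \<subseteq> InjHom G P Q)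
          \<and> (\<not> (subgroup P G \<and> subgroup Q G) \<longrightarrow> F P Q = {})"
  using fs unfolding fusion_system_def by (elim conjE) assumption
lemma fs_parts2:
  "\<forall>P Q R \<phi> \<psi>. \<phi> \<in> F P Q \<longrightarrow> \<psi> \<in> F Q R \<longrightarrow> compose P \<psi> \<phi> \<in> F P R"
  using fs unfolding fusion_system_def by (elim conjE) assumption
lemma fs_parts3:
  "\<forall>P Q \<phi>. \<phi> \<in> F P Q \<longrightarrow> \<phi> \<in> F P (\<phi> ` P) \<and> restrict (inv_into P \<phi>) (\<phi> ` P) \<in> F (\<phi> ` P) P"
  using fs unfolding fusion_system_def by (elim conjE) assumption

lemma fs_sub: "subgroup P G \<Longrightarrow> subgroup Q G \<Longrightarrow> HomS G P Q \<subseteq> F P Q \<and> F P Q \<subseteq> InjHom G P Q"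
  using fs_parts1 by simp

lemma fs_sg: "\<phi> \<in> F P Q \<Longrightarrow> subgroup P G \<and> subgroup Q G"
  using fs_parts1 by (metis empty_iff)

lemma fs_comp: "\<phi> \<in> F P Q \<Longrightarrow> \<psi> \<in> F Q R \<Longrightarrow> compose P \<psi> \<phi> \<in> F P R"
  using fs_parts2 by simp

lemma fs_img: "\<phi> \<in> F P Q \<Longrightarrow> \<phi> \<in> F P (\<phi> ` P) \<and> restrict (inv_into P \<phi>) (\<phi> ` P) \<in> F (\<phi> ` P) P"
  using fs_parts3 by simp

lemma conjm_F:
  assumes "subgroup P G" "subgroup Q G" "g \<in> carrier G" "\<And>x. x \<in> P \<Longrightarrow> g \<otimes> x \<otimes> inv g \<in> Q"
  shows "conjm G g P \<in> F P Q"
proof -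
  have "conjm G g P \<in> HomS G P Q" unfolding HomS_def using assms by blast
  thus ?thesis using fs_sub[OF assms(1,2)] by blast
qed

lemma F_props:
  assumes "\<phi> \<in> F P Q"
  shows "\<phi> \<in> extensional P" "\<And>x. x \<in> P \<Longrightarrow> \<phi> x \<in> Q"
    "\<And>x y. x \<in> P \<Longrightarrow> y \<in> P \<Longrightarrow> \<phi> (x \<otimes> y) = \<phi> x \<otimes> \<phi> y" "inj_on \<phi> P"
proof -
  have sg: "subgroup P G" "subgroup Q G" using fs_sg[OF assms] by auto
  have "\<phi> \<in> InjHom G P Q" using fs_sub[OF sg] assms by blast
  hence h: "\<phi> \<in> extensional P" "\<phi> \<in> hom (G\<lparr>carrier := P\<rparr>) (G\<lparr>carrier := Q\<rparr>)" "inj_on \<phi> P"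
    unfolding InjHom_def by auto
  show "\<phi> \<in> extensional P" "inj_on \<phi> P" using h by auto
  show "\<And>x. x \<in> P \<Longrightarrow> \<phi> x \<in> Q" using h(2) unfolding hom_def by auto
  show "\<And>x y. x \<in> P \<Longrightarrow> y \<in> P \<Longrightarrow> \<phi> (x \<otimes> y) = \<phi> x \<otimes> \<phi> y" using h(2) unfolding hom_def by auto
qed

lemma F_one:
  assumes "\<phi> \<in> F P Q" "subgroup P G"
  shows "\<phi> \<one> = \<one>"
proof -
  have sg: "subgroup Q G" using fs_sg[OF assms(1)] by auto
  have o: "\<one> \<in> P" using assms(2) subgroup.one_closed by blast
  have e: "\<phi> \<one> \<otimes> \<phi> \<one> = \<phi> \<one>" using F_props(3)[OF assms(1) o o] by simp
  have c: "\<phi> \<one> \<in> carrier G" using F_props(2)[OF assms(1) o] sg subgroup.subset by blast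
  show ?thesis using l_cancel_one[OF c c] e by simp
qed

lemma F_inv:
  assumes "\<phi> \<in> F P Q" "x \<in> P"
  shows "\<phi> (inv x) = inv (\<phi> x)"
proof -
  have sg: "subgroup P G" "subgroup Q G" using fs_sg[OF assms(1)] by auto
  have xS: "x \<in> carrier G" "inv x \<in> P"
    using subgroup.mem_carrier[OF sg(1) assms(2)] subgroup.m_inv_closed[OF sg(1) assms(2)] by auto
  have c: "\<phi> x \<in> carrier G" "\<phi> (inv x) \<in> carrier G"
    using subgroup.mem_carrier[OF sg(2) F_props(2)[OF assms(1) assms(2)]]
      subgroup.mem_carrier[OF sg(2) F_props(2)[OF assms(1) xS(2)]] by auto
  have "\<phi> x \<otimes> \<phi> (inv x) = \<phi> (x \<otimes> inv x)" using F_props(3)[OF assms(1) assms(2) xS(2)] by simp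
  also have "\<dots> = \<one>" using xS F_one[OF assms(1) sg(1)] by simp
  finally have e: "\<phi> x \<otimes> \<phi> (inv x) = \<one>" .
  show ?thesis using inv_equality[OF inv_comm[OF e c] c(1) c(2)] by simp
qed

lemma F_bij:
  assumes "\<phi> \<in> F P P"
  shows "\<phi> ` P = P" "bij_betw \<phi> P P" "\<phi> \<in> Bij P"
proof -
  have sg: "subgroup P G" using fs_sg[OF assms] by auto
  have fP: "finite P" using finite_subset[OF subgroup.subset[OF sg] fin] .
  have "\<phi> ` P \<subseteq> P" using F_props(2)[OF assms] by (rule image_subsetI)
  then show im: "\<phi> ` P = P" using endo_inj_surj[OF fP _ F_props(4)[OF assms]] by blast
  show "bij_betw \<phi> P P" using im F_props(4)[OF assms] by (simp add: bij_betw_def)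
  thus "\<phi> \<in> Bij P" using F_props(1)[OF assms] by (simp add: Bij_def)
qed

lemma id_conjm: "subgroup P G \<Longrightarrow> conjm G \<one> P = (\<lambda>x\<in>P. x)"
  unfolding conjm_def by (rule restrict_ext) (simp add: subgroup.mem_carrier)

lemma id_F: "subgroup P G \<Longrightarrow> (\<lambda>x\<in>P. x) \<in> F P P"
  using conjm_F[of P P \<one>] id_conjm by (simp add: subgroup.mem_carrier)

lemma subgroup_FPP:
  assumes sg: "subgroup P G"
  shows "subgroup (F P P) (BijGroup P)"
proof (rule subgroup.intro)
  show "F P P \<subseteq> carrier (BijGroup P)" using F_bij by (auto simp: BijGroup_def)
  fix x y assume x: "x \<in> F P P" and y: "y \<in> F P P"
  show "x \<otimes>\<^bsub>BijGroup P\<^esub> y \<in> F P P"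
    using F_bij(3)[OF x] F_bij(3)[OF y] fs_comp[OF y x] by (simp add: BijGroup_def)
next
  show "\<one>\<^bsub>BijGroup P\<^esub> \<in> F P P" using id_F[OF sg] by (simp add: BijGroup_def)
next
  fix x assume x: "x \<in> F P P"
  show "inv\<^bsub>BijGroup P\<^esub> x \<in> F P P"
    using fs_img[OF x] F_bij[OF x] by (simp add: inv_BijGroup)
qed

lemma group_AutF: "subgroup P G \<Longrightarrow> group (AutFgrp F P)"
  unfolding AutFgrp_def using group.subgroup_imp_group[OF group_BijGroup subgroup_FPP] .

lemma AutF_carrier[simp]: "carrier (AutFgrp F P) = F P P"
  by (simp add: AutFgrp_def)

lemma AutF_mult: "x \<in> F P P \<Longrightarrow> y \<in> F P P \<Longrightarrow> x \<otimes>\<^bsub>AutFgrp F P\<^esub> y = compose P x y"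
  using F_bij(3) by (simp add: AutFgrp_def BijGroup_def)

lemma AutF_one: "\<one>\<^bsub>AutFgrp F P\<^esub> = (\<lambda>x\<in>P. x)"
  by (simp add: AutFgrp_def BijGroup_def)

lemma AutF_inv: "x \<in> F P P \<Longrightarrow> inv\<^bsub>AutFgrp F P\<^esub> x = restrict (inv_into P x) P"
proof -
  assume x: "x \<in> F P P"
  have sg: "subgroup P G" using fs_sg[OF x] by auto
  show ?thesis using group.m_inv_consistent[OF group_BijGroup subgroup_FPP[OF sg] x] F_bij(3)[OF x]
    by (simp add: AutFgrp_def inv_BijGroup)
qed


lemma conjm_ext: "conjm G g P \<in> extensional P"
  unfolding conjm_def by simp

lemma conjm_compose:
  assumes "subgroup P G" "g \<in> carrier G" "h \<in> carrier G" "\<And>x. x \<in> P \<Longrightarrow> h \<otimes> x \<otimes> inv h \<in> P"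
  shows "compose P (conjm G g P) (conjm G h P) = conjm G (g \<otimes> h) P"
  unfolding compose_def conjm_def
proof (rule restrict_ext)
  fix x assume x: "x \<in> P"
  have xc: "x \<in> carrier G" using subgroup.mem_carrier[OF assms(1) x] .
  show "(\<lambda>x\<in>P. g \<otimes> x \<otimes> inv g) ((\<lambda>x\<in>P. h \<otimes> x \<otimes> inv h) x) = g \<otimes> h \<otimes> x \<otimes> inv (g \<otimes> h)"
    using x assms(4)[OF x] xc assms(2,3) by (simp add: inv_mult_group m_assoc)
qed

lemma AutX_img: "AutX G T P = (\<lambda>g. conjm G g P) ` T"
  unfolding AutX_def by blast

lemma kappa_hom:
  assumes "subgroup T G" "subgroup P G" "\<And>g x. g \<in> T \<Longrightarrow> x \<in> P \<Longrightarrow> g \<otimes> x \<otimes> inv g \<in> P"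
  shows "(\<lambda>g. conjm G g P) \<in> hom (G\<lparr>carrier := T\<rparr>) (AutFgrp F P)"
proof (rule homI)
  fix g assume g: "g \<in> carrier (G\<lparr>carrier := T\<rparr>)"
  hence gT: "g \<in> T" by simp
  show "conjm G g P \<in> carrier (AutFgrp F P)"
    using conjm_F[OF assms(2) assms(2) subgroup.mem_carrier[OF assms(1) gT] assms(3)[OF gT]] by simp
next
  fix g h assume g: "g \<in> carrier (G\<lparr>carrier := T\<rparr>)" and h: "h \<in> carrier (G\<lparr>carrier := T\<rparr>)"
  hence gT: "g \<in> T" and hT: "h \<in> T" by auto
  have gc: "g \<in> carrier G" and hc: "h \<in> carrier G"
    using subgroup.mem_carrier[OF assms(1) gT] subgroup.mem_carrier[OF assms(1) hT] by auto
  have Fg: "conjm G g P \<in> F P P" using conjm_F[OF assms(2) assms(2) gc assms(3)[OF gT]] .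
  have Fh: "conjm G h P \<in> F P P" using conjm_F[OF assms(2) assms(2) hc assms(3)[OF hT]] .
  show "conjm G (g \<otimes>\<^bsub>G\<lparr>carrier := T\<rparr>\<^esub> h) P = conjm G g P \<otimes>\<^bsub>AutFgrp F P\<^esub> conjm G h P"
    using AutF_mult[OF Fg Fh] conjm_compose[OF assms(2) gc hc assms(3)[OF hT]] by simp
qed

lemma AutX_subgroup:
  assumes "subgroup T G" "subgroup P G" "\<And>g x. g \<in> T \<Longrightarrow> x \<in> P \<Longrightarrow> g \<otimes> x \<otimes> inv g \<in> P"
  shows "subgroup (AutX G T P) (AutFgrp F P)"
proof -
  have gh: "group_hom (G\<lparr>carrier := T\<rparr>) (AutFgrp F P) (\<lambda>g. conjm G g P)"
    unfolding group_hom_def group_hom_axioms_def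
    using subgroup_imp_group[OF assms(1)] group_AutF[OF assms(2)] kappa_hom[OF assms] by simp
  show ?thesis using group_hom.img_is_subgroup[OF gh] AutX_img by simp
qed

end

lemma grp_conj:
  assumes "group H" "x \<in> carrier H" "b \<in> carrier H" "a \<in> carrier H" "x \<otimes>\<^bsub>H\<^esub> a = b \<otimes>\<^bsub>H\<^esub> x"
  shows "x \<otimes>\<^bsub>H\<^esub> a \<otimes>\<^bsub>H\<^esub> inv\<^bsub>H\<^esub> x = b"
  using assms by (metis group.is_monoid monoid.m_assoc group.inv_closed group.r_inv monoid.r_one)

context fsys begin

lemma conj_aut:
  assumes sg: "subgroup P G" and b: "\<beta> \<in> F P P" and q: "q \<in> P"
  shows "\<beta> \<otimes>\<^bsub>AutFgrp F P\<^esub> conjm G q P \<otimes>\<^bsub>AutFgrp F P\<^esub> inv\<^bsub>AutFgrp F P\<^esub> \<beta> = conjm G (\<beta> q) P"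
proof -
  have qc: "q \<in> carrier G" using subgroup.mem_carrier[OF sg q] .
  have bq: "\<beta> q \<in> P" using F_props(2)[OF b q] .
  have bqc: "\<beta> q \<in> carrier G" using subgroup.mem_carrier[OF sg bq] .
  have cl: "\<And>g x. g \<in> P \<Longrightarrow> x \<in> P \<Longrightarrow> g \<otimes> x \<otimes> inv g \<in> P"
    using sg by (simp add: subgroup.m_closed subgroup.m_inv_closed)
  have c1: "conjm G q P \<in> F P P" using conjm_F[OF sg sg qc cl[OF q]] .
  have c2: "conjm G (\<beta> q) P \<in> F P P" using conjm_F[OF sg sg bqc cl[OF bq]] .
  have eq: "compose P \<beta> (conjm G q P) = compose P (conjm G (\<beta> q) P) \<beta>"
    unfolding compose_def
  proof (rule restrict_ext)
    fix x assume x: "x \<in> P"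
    have bx: "\<beta> x \<in> P" using F_props(2)[OF b x] .
    have iq: "inv q \<in> P" using subgroup.m_inv_closed[OF sg q] .
    have qx: "q \<otimes> x \<in> P" using subgroup.m_closed[OF sg q x] .
    have "\<beta> (q \<otimes> x \<otimes> inv q) = \<beta> q \<otimes> \<beta> x \<otimes> inv (\<beta> q)"
      using F_props(3)[OF b qx iq] F_props(3)[OF b q x] F_inv[OF b q] by simp
    thus "\<beta> (conjm G q P x) = conjm G (\<beta> q) P (\<beta> x)"
      unfolding conjm_def using x bx by simp
  qed
  show ?thesis
    by (rule grp_conj[OF group_AutF[OF sg]]) (use b c1 c2 eq in \<open>simp_all add: AutF_mult\<close>)
qed

lemma Inn_normal:
  assumes sg: "subgroup P G"
  shows "AutX G P P \<lhd> AutFgrp F P"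
proof -
  have cl: "\<And>g x. g \<in> P \<Longrightarrow> x \<in> P \<Longrightarrow> g \<otimes> x \<otimes> inv g \<in> P"
    using sg by (simp add: subgroup.m_closed subgroup.m_inv_closed)
  have s: "subgroup (AutX G P P) (AutFgrp F P)" using AutX_subgroup[OF sg sg cl] .
  show ?thesis
    unfolding group.normal_inv_iff[OF group_AutF[OF sg]]
  proof (intro conjI s ballI)
    fix x h assume x: "x \<in> carrier (AutFgrp F P)" and h: "h \<in> AutX G P P"
    then obtain q where q: "q \<in> P" "h = conjm G q P" unfolding AutX_def by blast
    have "x \<otimes>\<^bsub>AutFgrp F P\<^esub> h \<otimes>\<^bsub>AutFgrp F P\<^esub> inv\<^bsub>AutFgrp F P\<^esub> x = conjm G (x q) P"
      using conj_aut[OF sg _ q(1)] x q(2) by simp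
    moreover have "x q \<in> P" using F_props(2)[of x P P q] x q(1) by simp
    ultimately show "x \<otimes>\<^bsub>AutFgrp F P\<^esub> h \<otimes>\<^bsub>AutFgrp F P\<^esub> inv\<^bsub>AutFgrp F P\<^esub> x \<in> AutX G P P"
      unfolding AutX_def by blast
  qed
qed

end

locale lem22 = fsys +
  fixes p :: nat and Q :: "'a set" and n :: nat
  assumes prp: "Factorial_Ring.prime p" and ordG: "card (carrier G) = p ^ n"
    and sgQ: "subgroup Q G" and charQ: "\<forall>\<alpha> \<in> auto G. \<alpha> ` Q = Q"
    and cent: "CS G Q = ZZ G Q" and sat: "saturated p G F"
begin

lemma sgS: "subgroup (carrier G) G" by (rule subgroup_self)

lemma Qc: "x \<in> Q \<Longrightarrow> x \<in> carrier G" using subgroup.mem_carrier[OF sgQ] .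

lemma F_auto:
  assumes a: "\<alpha> \<in> F (carrier G) (carrier G)"
  shows "\<alpha> \<in> auto G"
proof -
  have "\<alpha> \<in> hom G G"
    by (rule homI) (use F_props(2,3)[OF a] in auto)
  thus ?thesis unfolding auto_def using F_bij(3)[OF a] by simp
qed

lemma F_char: "\<alpha> \<in> F (carrier G) (carrier G) \<Longrightarrow> \<alpha> ` Q = Q"
  using charQ F_auto by blast

lemma conjS_F: "g \<in> carrier G \<Longrightarrow> conjm G g (carrier G) \<in> F (carrier G) (carrier G)"
  by (rule conjm_F[OF sgS sgS]) simp_all

lemma conj_Q:
  assumes g: "g \<in> carrier G" and x: "x \<in> Q"
  shows "g \<otimes> x \<otimes> inv g \<in> Q"
proof -
  have "conjm G g (carrier G) x \<in> conjm G g (carrier G) ` Q" using x by blast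
  hence "conjm G g (carrier G) x \<in> Q" using F_char[OF conjS_F[OF g]] by simp
  thus ?thesis unfolding conjm_def using Qc[OF x] by simp
qed

lemma conjQ_F: "g \<in> carrier G \<Longrightarrow> conjm G g Q \<in> F Q Q"
  by (rule conjm_F[OF sgQ sgQ]) (simp_all add: conj_Q)

lemma ZZ_sub: "ZZ G Q \<subseteq> Q" unfolding ZZ_def by blast

lemma restr_F:
  assumes a: "\<alpha> \<in> F (carrier G) (carrier G)"
  shows "restrict \<alpha> Q \<in> F Q Q"
proof -
  have i: "conjm G \<one> Q \<in> F Q (carrier G)"
    by (rule conjm_F[OF sgQ sgS]) (simp_all add: Qc)
  have c: "compose Q \<alpha> (conjm G \<one> Q) \<in> F Q (carrier G)" using fs_comp[OF i a] .
  have e: "compose Q \<alpha> (conjm G \<one> Q) = restrict \<alpha> Q"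
    unfolding compose_def conjm_def by (rule restrict_ext) (simp add: Qc)
  have "restrict \<alpha> Q ` Q = Q" using F_char[OF a] by simp
  thus ?thesis using fs_img[OF c[unfolded e]] by simp
qed

lemma r_hom: "(\<lambda>\<alpha>. restrict \<alpha> Q) \<in> hom (AutFgrp F (carrier G)) (AutFgrp F Q)"
proof (rule homI)
  fix x assume "x \<in> carrier (AutFgrp F (carrier G))"
  thus "restrict x Q \<in> carrier (AutFgrp F Q)" using restr_F by simp
next
  fix x y assume x: "x \<in> carrier (AutFgrp F (carrier G))" and y: "y \<in> carrier (AutFgrp F (carrier G))"
  hence x': "x \<in> F (carrier G) (carrier G)" and y': "y \<in> F (carrier G) (carrier G)" by auto
  have yQ: "\<And>z. z \<in> Q \<Longrightarrow> y z \<in> Q" using F_char[OF y'] by blast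
  have "restrict (compose (carrier G) x y) Q = compose Q (restrict x Q) (restrict y Q)"
    unfolding compose_def by (rule restrict_ext) (simp add: Qc yQ)
  thus "restrict (x \<otimes>\<^bsub>AutFgrp F (carrier G)\<^esub> y) Q
        = restrict x Q \<otimes>\<^bsub>AutFgrp F Q\<^esub> restrict y Q"
    using AutF_mult[OF x' y'] AutF_mult[OF restr_F[OF x'] restr_F[OF y']] by simp
qed

lemma r_ghom: "group_hom (AutFgrp F (carrier G)) (AutFgrp F Q) (\<lambda>\<alpha>. restrict \<alpha> Q)"
  unfolding group_hom_def group_hom_axioms_def
  using group_AutF[OF sgS] group_AutF[OF sgQ] r_hom by simp

lemma r_conj: "g \<in> carrier G \<Longrightarrow> restrict (conjm G g (carrier G)) Q = conjm G g Q"
  unfolding conjm_def by (rule restrict_ext) (simp add: Qc)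

lemma NS_Q: "NS G Q = carrier G"
proof -
  have "\<And>g. g \<in> carrier G \<Longrightarrow> (\<lambda>x. g \<otimes> x \<otimes> inv g) ` Q = Q"
  proof -
    fix g assume g: "g \<in> carrier G"
    have "(\<lambda>x. g \<otimes> x \<otimes> inv g) ` Q = conjm G g (carrier G) ` Q"
      unfolding conjm_def by (rule image_cong) (simp_all add: Qc)
    thus "(\<lambda>x. g \<otimes> x \<otimes> inv g) ` Q = Q" using F_char[OF conjS_F[OF g]] by simp
  qed
  thus ?thesis unfolding NS_def by blast
qed

lemma NS_S: "NS G (carrier G) = carrier G"
proof -
  have "\<And>g. g \<in> carrier G \<Longrightarrow> (\<lambda>x. g \<otimes> x \<otimes> inv g) ` (carrier G) = carrier G"
  proof -
    fix g assume g: "g \<in> carrier G"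
    have "(\<lambda>x. g \<otimes> x \<otimes> inv g) ` (carrier G) = conjm G g (carrier G) ` (carrier G)"
      unfolding conjm_def by (rule image_cong) simp_all
    thus "(\<lambda>x. g \<otimes> x \<otimes> inv g) ` (carrier G) = carrier G" using F_bij(1)[OF conjS_F[OF g]] by simp
  qed
  thus ?thesis unfolding NS_def by blast
qed

lemma NS_le: "card (NS G P) \<le> card (carrier G)"
  unfolding NS_def by (rule card_mono[OF fin]) blast

lemma sat1: "\<forall>P. fully_normalized G F P \<longrightarrow>
          fully_centralized G F P \<and> sylow_in p (AutX G (NS G P) P) (AutFgrp F P)"
  using sat unfolding saturated_def by (elim conjE) assumption

lemma sat2: "\<forall>P \<phi>. \<phi> \<in> F P (carrier G) \<and> fully_centralized G F (\<phi> ` P) \<longrightarrow>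
          (\<exists>\<psi> \<in> F (Nphi G P \<phi>) (carrier G). \<forall>x\<in>P. \<psi> x = \<phi> x)"
  using sat unfolding saturated_def by (elim conjE) assumption

lemma fn_Q: "fully_normalized G F Q"
  unfolding fully_normalized_def NS_Q using sgQ NS_le by blast

lemma fn_S: "fully_normalized G F (carrier G)"
  unfolding fully_normalized_def NS_S using sgS NS_le by blast

lemma fc_Q: "fully_centralized G F Q" using sat1 fn_Q by blast

lemma sylow_S: "sylow_in p (AutX G (carrier G) (carrier G)) (AutFgrp F (carrier G))"
  using sat1 fn_S NS_S by metis

lemma extend:
  assumes b: "\<beta> \<in> F Q Q"
    and c: "\<And>g. g \<in> carrier G \<Longrightarrow> \<exists>h \<in> carrier G. \<forall>y \<in> Q. \<beta> (g \<otimes> y \<otimes> inv g) = h \<otimes> \<beta> y \<otimes> inv h"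
  shows "\<exists>\<alpha> \<in> F (carrier G) (carrier G). restrict \<alpha> Q = \<beta>"
proof -
  have i: "conjm G \<one> Q \<in> F Q (carrier G)"
    by (rule conjm_F[OF sgQ sgS]) (simp_all add: Qc)
  have cm: "compose Q (conjm G \<one> Q) \<beta> \<in> F Q (carrier G)" using fs_comp[OF b i] .
  have "compose Q (conjm G \<one> Q) \<beta> = restrict \<beta> Q"
    unfolding compose_def conjm_def by (rule restrict_ext) (simp add: Qc F_props(2)[OF b])
  also have "\<dots> = \<beta>" using F_props(1)[OF b] by (simp add: extensional_restrict)
  finally have bS: "\<beta> \<in> F Q (carrier G)" using cm by simp
  have bQ: "\<beta> ` Q = Q" using F_bij(1)[OF b] .
  obtain \<psi> where psi: "\<psi> \<in> F (Nphi G Q \<beta>) (carrier G)" "\<And>x. x \<in> Q \<Longrightarrow> \<psi> x = \<beta> x"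
    using sat2 bS fc_Q bQ by fastforce
  have "Nphi G Q \<beta> = carrier G"
  proof
    show "Nphi G Q \<beta> \<subseteq> carrier G" unfolding Nphi_def NS_def by blast
  next
    show "carrier G \<subseteq> Nphi G Q \<beta>"
    proof
      fix g assume g: "g \<in> carrier G"
      obtain h where h: "h \<in> carrier G" "\<And>y. y \<in> Q \<Longrightarrow> \<beta> (g \<otimes> y \<otimes> inv g) = h \<otimes> \<beta> y \<otimes> inv h"
        using c[OF g] by blast
      have "\<forall>y \<in> \<beta> ` Q. \<beta> (g \<otimes> inv_into Q \<beta> y \<otimes> inv g) = h \<otimes> y \<otimes> inv h"
      proof
        fix y assume y: "y \<in> \<beta> ` Q"
        have "inv_into Q \<beta> y \<in> Q" using inv_into_into[OF y] .
        moreover have "\<beta> (inv_into Q \<beta> y) = y" using f_inv_into_f[OF y] .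
        ultimately show "\<beta> (g \<otimes> inv_into Q \<beta> y \<otimes> inv g) = h \<otimes> y \<otimes> inv h" using h(2) by metis
      qed
      thus "g \<in> Nphi G Q \<beta>" unfolding Nphi_def using g h(1) NS_Q bQ by auto
    qed
  qed
  hence psi': "\<psi> \<in> F (carrier G) (carrier G)" using psi(1) by simp
  have "restrict \<psi> Q = restrict \<beta> Q" using psi(2) by (rule restrict_ext)
  also have "\<dots> = \<beta>" using F_props(1)[OF b] by (simp add: extensional_restrict)
  finally show ?thesis using psi' by blast
qed

end

lemma lr_coset_img: "x <#\<^bsub>H\<^esub> K #>\<^bsub>H\<^esub> y = (\<lambda>k. x \<otimes>\<^bsub>H\<^esub> k \<otimes>\<^bsub>H\<^esub> y) ` K"
  unfolding l_coset_def r_coset_def by blast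

lemma grp_conj2:
  assumes "group H" "x \<in> carrier H" "a \<in> carrier H" "x \<otimes>\<^bsub>H\<^esub> a \<otimes>\<^bsub>H\<^esub> inv\<^bsub>H\<^esub> x = b"
  shows "x \<otimes>\<^bsub>H\<^esub> a = b \<otimes>\<^bsub>H\<^esub> x"
  using assms by (metis group.is_monoid monoid.m_assoc group.inv_closed group.l_inv monoid.r_one monoid.m_closed)

lemma normalizer_eq:
  assumes "H0 \<subseteq> carrier H" "x \<in> carrier H"
  shows "x \<in> normalizer H H0 \<longleftrightarrow> (\<lambda>k. x \<otimes>\<^bsub>H\<^esub> k \<otimes>\<^bsub>H\<^esub> inv\<^bsub>H\<^esub> x) ` H0 = H0"
  using assms unfolding normalizer_def stabilizer_def lr_coset_img by simp

context lem22 begin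

lemma AS_sub: "AutX G (carrier G) Q \<subseteq> F Q Q"
  unfolding AutX_def using conjQ_F by blast

lemma norm_cond:
  assumes b: "\<beta> \<in> normalizer (AutFgrp F Q) (AutX G (carrier G) Q)" and g: "g \<in> carrier G"
  shows "\<beta> \<in> F Q Q" "\<exists>h \<in> carrier G. \<forall>y \<in> Q. \<beta> (g \<otimes> y \<otimes> inv g) = h \<otimes> \<beta> y \<otimes> inv h"
proof -
  show bF: "\<beta> \<in> F Q Q" using b unfolding normalizer_def stabilizer_def by simp
  have eq: "(\<lambda>k. \<beta> \<otimes>\<^bsub>AutFgrp F Q\<^esub> k \<otimes>\<^bsub>AutFgrp F Q\<^esub> inv\<^bsub>AutFgrp F Q\<^esub> \<beta>) ` AutX G (carrier G) Q
      = AutX G (carrier G) Q"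
    using normalizer_eq[of "AutX G (carrier G) Q" "AutFgrp F Q" \<beta>] AS_sub bF b by simp
  have cg: "conjm G g Q \<in> AutX G (carrier G) Q" unfolding AutX_def using g by blast
  hence "\<beta> \<otimes>\<^bsub>AutFgrp F Q\<^esub> conjm G g Q \<otimes>\<^bsub>AutFgrp F Q\<^esub> inv\<^bsub>AutFgrp F Q\<^esub> \<beta> \<in> AutX G (carrier G) Q"
    using eq by blast
  then obtain h where h: "h \<in> carrier G"
    "\<beta> \<otimes>\<^bsub>AutFgrp F Q\<^esub> conjm G g Q \<otimes>\<^bsub>AutFgrp F Q\<^esub> inv\<^bsub>AutFgrp F Q\<^esub> \<beta> = conjm G h Q"
    unfolding AutX_def by blast
  have "\<beta> \<otimes>\<^bsub>AutFgrp F Q\<^esub> conjm G g Q = conjm G h Q \<otimes>\<^bsub>AutFgrp F Q\<^esub> \<beta>"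
    by (rule grp_conj2[OF group_AutF[OF sgQ] _ _ h(2)]) (use bF conjQ_F[OF g] in simp_all)
  hence ce: "compose Q \<beta> (conjm G g Q) = compose Q (conjm G h Q) \<beta>"
    using AutF_mult bF conjQ_F[OF g] conjQ_F[OF h(1)] by simp
  have "\<forall>y \<in> Q. \<beta> (g \<otimes> y \<otimes> inv g) = h \<otimes> \<beta> y \<otimes> inv h"
  proof
    fix y assume y: "y \<in> Q"
    have "compose Q \<beta> (conjm G g Q) y = compose Q (conjm G h Q) \<beta> y" using ce by simp
    thus "\<beta> (g \<otimes> y \<otimes> inv g) = h \<otimes> \<beta> y \<otimes> inv h"
      using y F_props(2)[OF bF y] unfolding compose_def conjm_def by simp
  qed
  thus "\<exists>h \<in> carrier G. \<forall>y \<in> Q. \<beta> (g \<otimes> y \<otimes> inv g) = h \<otimes> \<beta> y \<otimes> inv h" using h(1) by blast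
qed

lemma restr_norm:
  assumes a: "\<alpha> \<in> F (carrier G) (carrier G)"
  shows "restrict \<alpha> Q \<in> normalizer (AutFgrp F Q) (AutX G (carrier G) Q)"
proof -
  interpret r: group_hom "AutFgrp F (carrier G)" "AutFgrp F Q" "\<lambda>\<alpha>. restrict \<alpha> Q" by (rule r_ghom)
  have bF: "restrict \<alpha> Q \<in> F Q Q" using restr_F[OF a] .
  have key: "\<And>g. g \<in> carrier G \<Longrightarrow> restrict \<alpha> Q \<otimes>\<^bsub>AutFgrp F Q\<^esub> conjm G g Q \<otimes>\<^bsub>AutFgrp F Q\<^esub>
         inv\<^bsub>AutFgrp F Q\<^esub> restrict \<alpha> Q = conjm G (\<alpha> g) Q"
  proof -
    fix g assume g: "g \<in> carrier G"
    have ag: "\<alpha> g \<in> carrier G" using F_props(2)[OF a g] .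
    have c: "conjm G g (carrier G) \<in> F (carrier G) (carrier G)" using conjS_F[OF g] .
    have "restrict (\<alpha> \<otimes>\<^bsub>AutFgrp F (carrier G)\<^esub> conjm G g (carrier G) \<otimes>\<^bsub>AutFgrp F (carrier G)\<^esub>
          inv\<^bsub>AutFgrp F (carrier G)\<^esub> \<alpha>) Q
        = restrict \<alpha> Q \<otimes>\<^bsub>AutFgrp F Q\<^esub> restrict (conjm G g (carrier G)) Q \<otimes>\<^bsub>AutFgrp F Q\<^esub>
          inv\<^bsub>AutFgrp F Q\<^esub> restrict \<alpha> Q"
    proof -
      have ac: "\<alpha> \<in> carrier (AutFgrp F (carrier G))" "conjm G g (carrier G) \<in> carrier (AutFgrp F (carrier G))"
        using a c by simp_all
      have m1: "\<alpha> \<otimes>\<^bsub>AutFgrp F (carrier G)\<^esub> conjm G g (carrier G) \<in> carrier (AutFgrp F (carrier G))"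
        using r.G.m_closed[OF ac] .
      have i1: "inv\<^bsub>AutFgrp F (carrier G)\<^esub> \<alpha> \<in> carrier (AutFgrp F (carrier G))"
        using r.G.inv_closed[OF ac(1)] .
      show ?thesis using r.hom_mult[OF m1 i1] r.hom_mult[OF ac] r.hom_inv[OF ac(1)] by simp
    qed
    moreover have "\<alpha> \<otimes>\<^bsub>AutFgrp F (carrier G)\<^esub> conjm G g (carrier G) \<otimes>\<^bsub>AutFgrp F (carrier G)\<^esub>
          inv\<^bsub>AutFgrp F (carrier G)\<^esub> \<alpha> = conjm G (\<alpha> g) (carrier G)"
      using conj_aut[OF sgS a g] .
    ultimately show "restrict \<alpha> Q \<otimes>\<^bsub>AutFgrp F Q\<^esub> conjm G g Q \<otimes>\<^bsub>AutFgrp F Q\<^esub>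
         inv\<^bsub>AutFgrp F Q\<^esub> restrict \<alpha> Q = conjm G (\<alpha> g) Q"
      using r_conj[OF g] r_conj[OF ag] by simp
  qed
  have "(\<lambda>k. restrict \<alpha> Q \<otimes>\<^bsub>AutFgrp F Q\<^esub> k \<otimes>\<^bsub>AutFgrp F Q\<^esub> inv\<^bsub>AutFgrp F Q\<^esub> restrict \<alpha> Q)
         ` AutX G (carrier G) Q = (\<lambda>g. conjm G g Q) ` (\<alpha> ` carrier G)"
    unfolding AutX_img image_image using key by (rule image_cong[OF refl])
  also have "\<dots> = AutX G (carrier G) Q" using F_bij(1)[OF a] AutX_img by simp
  finally show ?thesis using normalizer_eq[of "AutX G (carrier G) Q" "AutFgrp F Q"] AS_sub bF by simp
qed

end

context lem22 begin

lemma Qpow: "z \<in> Q \<Longrightarrow> z [^] (k::nat) \<in> Q"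
  by (induction k) (simp_all add: subgroup.one_closed[OF sgQ] subgroup.m_closed[OF sgQ])

lemma kernel_triv:
  assumes a: "\<alpha> \<in> F (carrier G) (carrier G)" and idQ: "restrict \<alpha> Q = (\<lambda>x\<in>Q. x)"
  shows "\<exists>z \<in> ZZ G Q. \<alpha> = conjm G z (carrier G)"
proof -
  let ?A = "AutFgrp F (carrier G)"
  let ?I = "AutX G (carrier G) (carrier G)"
  interpret A: group ?A by (rule group_AutF[OF sgS])
  have fixQ: "\<And>x. x \<in> Q \<Longrightarrow> \<alpha> x = x"
  proof -
    fix x assume x: "x \<in> Q"
    have "restrict \<alpha> Q x = (\<lambda>x\<in>Q. x) x" using idQ by simp
    thus "\<alpha> x = x" using x by simp
  qed
  have zQ: "inv g \<otimes> \<alpha> g \<in> Q" if g: "g \<in> carrier G" for g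
  proof -
    have ag: "\<alpha> g \<in> carrier G" using F_props(2)[OF a g] .
    have "inv g \<otimes> \<alpha> g \<in> CS G Q" unfolding CS_def
    proof (intro CollectI conjI ballI)
      show "inv g \<otimes> \<alpha> g \<in> carrier G" using g ag by simp
      fix x assume x: "x \<in> Q"
      have xc: "x \<in> carrier G" using Qc[OF x] .
      have "\<alpha> (g \<otimes> x \<otimes> inv g) = g \<otimes> x \<otimes> inv g" using fixQ conj_Q[OF g x] by simp
      moreover have "\<alpha> (g \<otimes> x \<otimes> inv g) = \<alpha> g \<otimes> x \<otimes> inv (\<alpha> g)"
        using F_props(3)[OF a] F_inv[OF a g] fixQ[OF x] g xc by simp
      ultimately have E: "g \<otimes> x \<otimes> inv g = \<alpha> g \<otimes> x \<otimes> inv (\<alpha> g)" by simp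
      have "inv g \<otimes> (g \<otimes> x \<otimes> inv g) \<otimes> \<alpha> g = inv g \<otimes> (\<alpha> g \<otimes> x \<otimes> inv (\<alpha> g)) \<otimes> \<alpha> g"
        using E by simp
      hence H: "g \<otimes> (x \<otimes> (inv g \<otimes> \<alpha> g)) = \<alpha> g \<otimes> x"
        using g ag xc by (simp add: m_assoc)
      have "x \<otimes> (inv g \<otimes> \<alpha> g) = inv g \<otimes> (\<alpha> g \<otimes> x)"
        using inv_solve_left[of "x \<otimes> (inv g \<otimes> \<alpha> g)" g "\<alpha> g \<otimes> x"] H g ag xc by simp
      thus "inv g \<otimes> \<alpha> g \<otimes> x = x \<otimes> (inv g \<otimes> \<alpha> g)"
        using g ag xc by (simp add: m_assoc)
    qed
    thus ?thesis using cent ZZ_sub by blast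
  qed
  have pw: "(\<alpha> [^]\<^bsub>?A\<^esub> k) g = g \<otimes> (inv g \<otimes> \<alpha> g) [^] k" if g: "g \<in> carrier G" for g and k :: nat
  proof (induction k)
    case 0
    show ?case using g by (simp add: AutF_one)
  next
    case (Suc k)
    let ?z = "inv g \<otimes> \<alpha> g"
    have z: "?z \<in> Q" using zQ[OF g] .
    have ac: "\<alpha> \<in> carrier ?A" using a by simp
    have pc: "\<alpha> [^]\<^bsub>?A\<^esub> k \<in> F (carrier G) (carrier G)" using A.nat_pow_closed[OF ac] by simp
    have "(\<alpha> [^]\<^bsub>?A\<^esub> Suc k) g = compose (carrier G) \<alpha> (\<alpha> [^]\<^bsub>?A\<^esub> k) g"
      using A.nat_pow_Suc2[OF ac] AutF_mult[OF a pc] by simp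
    also have "\<dots> = \<alpha> (g \<otimes> ?z [^] k)" using g Suc by (simp add: compose_def)
    also have "\<dots> = \<alpha> g \<otimes> ?z [^] k"
      using F_props(3)[OF a g] fixQ[OF Qpow[OF z]] Qc[OF Qpow[OF z]] by simp
    also have "\<dots> = g \<otimes> ?z [^] Suc k"
    proof -
      have zc: "?z \<in> carrier G" using Qc[OF z] .
      have gz: "g \<otimes> ?z = \<alpha> g" using g F_props(2)[OF a g] by (simp add: m_assoc[symmetric])
      have "g \<otimes> ?z [^] Suc k = g \<otimes> (?z \<otimes> ?z [^] k)" using nat_pow_Suc2[OF zc] by simp
      also have "\<dots> = (g \<otimes> ?z) \<otimes> ?z [^] k" using g zc by (simp add: m_assoc)
      finally show ?thesis using gz by simp
    qed
    finally show ?case .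
  qed
  have ppow: "\<alpha> [^]\<^bsub>?A\<^esub> (p ^ n) = \<one>\<^bsub>?A\<^esub>"
  proof -
    have ac: "\<alpha> \<in> carrier ?A" using a by simp
    have pc: "\<alpha> [^]\<^bsub>?A\<^esub> (p ^ n) \<in> F (carrier G) (carrier G)" using A.nat_pow_closed[OF ac] by simp
    show ?thesis unfolding AutF_one
    proof (rule extensionalityI[OF F_props(1)[OF pc]])
      show "(\<lambda>x\<in>carrier G. x) \<in> extensional (carrier G)" by simp
      fix g assume g: "g \<in> carrier G"
      have zc: "inv g \<otimes> \<alpha> g \<in> carrier G" using Qc[OF zQ[OF g]] .
      have "(inv g \<otimes> \<alpha> g) [^] (p ^ n) = \<one>"
        using pow_order_eq_1[OF zc] ordG by (simp add: order_def)
      thus "(\<alpha> [^]\<^bsub>?A\<^esub> (p ^ n)) g = (\<lambda>x\<in>carrier G. x) g" using pw[OF g] g by simp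
    qed
  qed
  have nI: "?I \<lhd> ?A" using Inn_normal[OF sgS] .
  interpret N: normal ?I ?A by (rule nI)
  interpret M: group "?A Mod ?I" by (rule N.factorgroup_is_group)
  have gh: "group_hom ?A (?A Mod ?I) (\<lambda>x. ?I #>\<^bsub>?A\<^esub> x)"
    unfolding group_hom_def group_hom_axioms_def
    using A.is_group M.is_group N.r_coset_hom_Mod by simp
  have ac: "\<alpha> \<in> carrier ?A" using a by simp
  have pic: "?I #>\<^bsub>?A\<^esub> \<alpha> \<in> carrier (?A Mod ?I)"
    using group_hom.hom_closed[OF gh ac] .
  have "(?I #>\<^bsub>?A\<^esub> \<alpha>) [^]\<^bsub>?A Mod ?I\<^esub> (p ^ n) = ?I #>\<^bsub>?A\<^esub> (\<alpha> [^]\<^bsub>?A\<^esub> (p ^ n))"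
    using group_hom.hom_nat_pow[OF gh ac] by simp
  also have "\<dots> = \<one>\<^bsub>?A Mod ?I\<^esub>"
    using ppow group_hom.hom_one[OF gh] by simp
  finally have d1: "M.ord (?I #>\<^bsub>?A\<^esub> \<alpha>) dvd p ^ n" using M.pow_eq_id[OF pic] by simp
  have d2: "M.ord (?I #>\<^bsub>?A\<^esub> \<alpha>) dvd order (?A Mod ?I)" using M.ord_dvd_group_order[OF pic] .
  have sy1: "\<exists>e. card ?I = p ^ e" using sylow_S unfolding sylow_in_def by blast
  have sy2: "\<exists>m. card (carrier ?A) = card ?I * m \<and> \<not> p dvd m" using sylow_S unfolding sylow_in_def by blast
  obtain e where sye: "card ?I = p ^ e" using sy1 by blast
  obtain m where sym: "card (carrier ?A) = card ?I * m" "\<not> p dvd m" using sy2 by blast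
  have sy: "card ?I = p ^ e" "card (F (carrier G) (carrier G)) = card ?I * m" "\<not> p dvd m"
    using sye sym by simp_all
  have lag: "card (rcosets\<^bsub>?A\<^esub> ?I) * card ?I = card (F (carrier G) (carrier G))"
    using A.lagrange[OF N.subgroup_axioms] by (simp add: order_def)
  have "card ?I > 0" using sy(1) prime_gt_0_nat[OF prp] by simp
  hence "card (rcosets\<^bsub>?A\<^esub> ?I) = m" using lag sy(2) by simp
  hence ordM: "order (?A Mod ?I) = m" by (simp add: order_def FactGroup_def)
  have cop: "coprime (p ^ n) m" using prime_imp_coprime[OF prp sy(3)] by simp
  have "is_unit (M.ord (?I #>\<^bsub>?A\<^esub> \<alpha>))" using coprime_common_divisor[OF cop d1 d2[unfolded ordM]] .
  hence "M.ord (?I #>\<^bsub>?A\<^esub> \<alpha>) = 1" by simp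
  hence "?I #>\<^bsub>?A\<^esub> \<alpha> = \<one>\<^bsub>?A Mod ?I\<^esub>" using M.ord_eq_1[OF pic] by simp
  hence "?I #>\<^bsub>?A\<^esub> \<alpha> = ?I" by (simp add: FactGroup_def)
  hence "\<alpha> \<in> ?I" using A.coset_join1[OF _ ac N.subgroup_axioms] by simp
  then obtain s where s: "s \<in> carrier G" "\<alpha> = conjm G s (carrier G)" unfolding AutX_def by blast
  have "s \<in> CS G Q" unfolding CS_def
  proof (intro CollectI conjI ballI)
    show "s \<in> carrier G" using s(1) .
    fix x assume x: "x \<in> Q"
    have "conjm G s Q x = x" using idQ r_conj[OF s(1)] s(2) x by (metis restrict_apply')
    hence E: "s \<otimes> x \<otimes> inv s = x" using x unfolding conjm_def by simp
    have xc: "x \<in> carrier G" using Qc[OF x] .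
    have "s \<otimes> x \<otimes> inv s \<otimes> s = x \<otimes> s" using E by simp
    thus "s \<otimes> x = x \<otimes> s" using s(1) xc by (simp add: m_assoc)
  qed
  thus ?thesis using cent s(2) by blast
qed

end

context lem22 begin

lemma N_sub: "subgroup (normalizer (AutFgrp F Q) (AutX G (carrier G) Q)) (AutFgrp F Q)"
  using group.normalizer_imp_subgroup[OF group_AutF[OF sgQ]] AS_sub by simp

lemma r_ghom1: "group_hom (AutFgrp F (carrier G))
   ((AutFgrp F Q)\<lparr>carrier := normalizer (AutFgrp F Q) (AutX G (carrier G) Q)\<rparr>) (\<lambda>\<alpha>. restrict \<alpha> Q)"
proof -
  interpret r: group_hom "AutFgrp F (carrier G)" "AutFgrp F Q" "\<lambda>\<alpha>. restrict \<alpha> Q" by (rule r_ghom)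
  have h: "(\<lambda>\<alpha>. restrict \<alpha> Q) \<in> hom (AutFgrp F (carrier G))
   ((AutFgrp F Q)\<lparr>carrier := normalizer (AutFgrp F Q) (AutX G (carrier G) Q)\<rparr>)"
  proof (rule homI)
    fix x assume "x \<in> carrier (AutFgrp F (carrier G))"
    thus "restrict x Q \<in> carrier ((AutFgrp F Q)\<lparr>carrier := normalizer (AutFgrp F Q) (AutX G (carrier G) Q)\<rparr>)"
      using restr_norm by simp
  next
    fix x y assume "x \<in> carrier (AutFgrp F (carrier G))" "y \<in> carrier (AutFgrp F (carrier G))"
    thus "restrict (x \<otimes>\<^bsub>AutFgrp F (carrier G)\<^esub> y) Q =
       restrict x Q \<otimes>\<^bsub>(AutFgrp F Q)\<lparr>carrier := normalizer (AutFgrp F Q) (AutX G (carrier G) Q)\<rparr>\<^esub> restrict y Q"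
      using r.hom_mult by simp
  qed
  show ?thesis
    unfolding group_hom_def group_hom_axioms_def
    using group_AutF[OF sgS] group.subgroup_imp_group[OF group_AutF[OF sgQ] N_sub] h by simp
qed

lemma r_image: "(\<lambda>\<alpha>. restrict \<alpha> Q) ` F (carrier G) (carrier G) = normalizer (AutFgrp F Q) (AutX G (carrier G) Q)"
proof
  show "(\<lambda>\<alpha>. restrict \<alpha> Q) ` F (carrier G) (carrier G) \<subseteq> normalizer (AutFgrp F Q) (AutX G (carrier G) Q)"
    using restr_norm by blast
next
  show "normalizer (AutFgrp F Q) (AutX G (carrier G) Q) \<subseteq> (\<lambda>\<alpha>. restrict \<alpha> Q) ` F (carrier G) (carrier G)"
  proof
    fix \<beta> assume b: "\<beta> \<in> normalizer (AutFgrp F Q) (AutX G (carrier G) Q)"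
    obtain \<alpha> where "\<alpha> \<in> F (carrier G) (carrier G)" "restrict \<alpha> Q = \<beta>"
      using extend[OF norm_cond(1)[OF b one_closed] norm_cond(2)[OF b]] by blast
    thus "\<beta> \<in> (\<lambda>\<alpha>. restrict \<alpha> Q) ` F (carrier G) (carrier G)" by blast
  qed
qed

lemma conjZ_id:
  assumes z: "z \<in> ZZ G Q"
  shows "conjm G z Q = (\<lambda>x\<in>Q. x)"
  unfolding conjm_def
proof (rule restrict_ext)
  fix x assume x: "x \<in> Q"
  have zc: "z \<in> carrier G" using Qc ZZ_sub z by blast
  have "z \<otimes> x = x \<otimes> z" using z x unfolding ZZ_def by blast
  thus "z \<otimes> x \<otimes> inv z = x" using zc Qc[OF x] by (simp add: m_assoc)
qed

lemma r_kernel1: "kernel (AutFgrp F (carrier G))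
   ((AutFgrp F Q)\<lparr>carrier := normalizer (AutFgrp F Q) (AutX G (carrier G) Q)\<rparr>) (\<lambda>\<alpha>. restrict \<alpha> Q)
   = AutX G (ZZ G Q) (carrier G)"
proof -
  have "{x \<in> F (carrier G) (carrier G). restrict x Q = (\<lambda>x\<in>Q. x)} = AutX G (ZZ G Q) (carrier G)"
  proof
    show "{x \<in> F (carrier G) (carrier G). restrict x Q = (\<lambda>x\<in>Q. x)} \<subseteq> AutX G (ZZ G Q) (carrier G)"
      using kernel_triv unfolding AutX_def by blast
  next
    show "AutX G (ZZ G Q) (carrier G) \<subseteq> {x \<in> F (carrier G) (carrier G). restrict x Q = (\<lambda>x\<in>Q. x)}"
    proof
      fix x assume "x \<in> AutX G (ZZ G Q) (carrier G)"
      then obtain z where z: "z \<in> ZZ G Q" "x = conjm G z (carrier G)" unfolding AutX_def by blast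
      have zc: "z \<in> carrier G" using Qc ZZ_sub z(1) by blast
      show "x \<in> {x \<in> F (carrier G) (carrier G). restrict x Q = (\<lambda>x\<in>Q. x)}"
        using conjS_F[OF zc] r_conj[OF zc] conjZ_id[OF z(1)] z(2) by simp
    qed
  qed
  thus ?thesis unfolding kernel_def by (simp add: AutF_one)
qed

theorem part1: "(\<lambda>C. the_elem ((\<lambda>\<alpha>. restrict \<alpha> Q) ` C))
           \<in> iso (AutFgrp F (carrier G) Mod AutX G (ZZ G Q) (carrier G))
                 ((AutFgrp F Q)\<lparr>carrier := normalizer (AutFgrp F Q) (AutX G (carrier G) Q)\<rparr>)"
  using group_hom.FactGroup_iso_set[OF r_ghom1] r_image r_kernel1 by simp

end

lemma norm_img:
  assumes gh: "group_hom B C \<pi>" and A0: "A0 \<subseteq> carrier B" and nn: "x \<in> normalizer B A0"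
  shows "\<pi> x \<in> normalizer C (\<pi> ` A0)"
proof -
  interpret h: group_hom B C \<pi> by (rule gh)
  have xc: "x \<in> carrier B" using nn unfolding normalizer_def stabilizer_def by simp
  have e: "(\<lambda>k. x \<otimes>\<^bsub>B\<^esub> k \<otimes>\<^bsub>B\<^esub> inv\<^bsub>B\<^esub> x) ` A0 = A0"
    using normalizer_eq[OF A0 xc] nn by simp
  have A1: "\<pi> ` A0 \<subseteq> carrier C" using A0 h.hom_closed by blast
  have "(\<lambda>k. \<pi> x \<otimes>\<^bsub>C\<^esub> k \<otimes>\<^bsub>C\<^esub> inv\<^bsub>C\<^esub> \<pi> x) ` \<pi> ` A0
      = \<pi> ` ((\<lambda>k. x \<otimes>\<^bsub>B\<^esub> k \<otimes>\<^bsub>B\<^esub> inv\<^bsub>B\<^esub> x) ` A0)"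
    unfolding image_image
  proof (rule image_cong[OF refl])
    fix k assume "k \<in> A0"
    hence kc: "k \<in> carrier B" using A0 by blast
    show "\<pi> x \<otimes>\<^bsub>C\<^esub> \<pi> k \<otimes>\<^bsub>C\<^esub> inv\<^bsub>C\<^esub> \<pi> x = \<pi> (x \<otimes>\<^bsub>B\<^esub> k \<otimes>\<^bsub>B\<^esub> inv\<^bsub>B\<^esub> x)"
      using xc kc by simp
  qed
  also have "\<dots> = \<pi> ` A0" using e by simp
  finally show ?thesis using normalizer_eq[OF A1 h.hom_closed[OF xc]] by simp
qed

lemma norm_img2:
  assumes gh: "group_hom B C \<pi>" and A0: "A0 \<subseteq> carrier B" and bc: "b \<in> carrier B"
    and nn: "\<pi> b \<in> normalizer C (\<pi> ` A0)" and a: "a \<in> A0"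
  shows "\<exists>a' \<in> A0. \<pi> (b \<otimes>\<^bsub>B\<^esub> a \<otimes>\<^bsub>B\<^esub> inv\<^bsub>B\<^esub> b) = \<pi> a'"
proof -
  interpret h: group_hom B C \<pi> by (rule gh)
  have A1: "\<pi> ` A0 \<subseteq> carrier C" using A0 h.hom_closed by blast
  have e: "(\<lambda>k. \<pi> b \<otimes>\<^bsub>C\<^esub> k \<otimes>\<^bsub>C\<^esub> inv\<^bsub>C\<^esub> \<pi> b) ` \<pi> ` A0 = \<pi> ` A0"
    using normalizer_eq[OF A1 h.hom_closed[OF bc]] nn by simp
  have ac: "a \<in> carrier B" using A0 a by blast
  have "\<pi> (b \<otimes>\<^bsub>B\<^esub> a \<otimes>\<^bsub>B\<^esub> inv\<^bsub>B\<^esub> b) = \<pi> b \<otimes>\<^bsub>C\<^esub> \<pi> a \<otimes>\<^bsub>C\<^esub> inv\<^bsub>C\<^esub> \<pi> b"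
    using bc ac by simp
  also have "\<dots> \<in> \<pi> ` A0" using e a by blast
  finally show ?thesis by blast
qed

context lem22 begin

lemma conj_to_cond:
  assumes bF: "\<beta> \<in> F Q Q" and g: "g \<in> carrier G" and k: "k \<in> carrier G"
    and e: "\<beta> \<otimes>\<^bsub>AutFgrp F Q\<^esub> conjm G g Q \<otimes>\<^bsub>AutFgrp F Q\<^esub> inv\<^bsub>AutFgrp F Q\<^esub> \<beta> = conjm G k Q"
  shows "\<forall>y \<in> Q. \<beta> (g \<otimes> y \<otimes> inv g) = k \<otimes> \<beta> y \<otimes> inv k"
proof
  have "\<beta> \<otimes>\<^bsub>AutFgrp F Q\<^esub> conjm G g Q = conjm G k Q \<otimes>\<^bsub>AutFgrp F Q\<^esub> \<beta>"
    by (rule grp_conj2[OF group_AutF[OF sgQ] _ _ e]) (use bF conjQ_F[OF g] in simp_all)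
  hence ce: "compose Q \<beta> (conjm G g Q) = compose Q (conjm G k Q) \<beta>"
    using AutF_mult bF conjQ_F[OF g] conjQ_F[OF k] by simp
  fix y assume y: "y \<in> Q"
  have "compose Q \<beta> (conjm G g Q) y = compose Q (conjm G k Q) \<beta> y" using ce by simp
  thus "\<beta> (g \<otimes> y \<otimes> inv g) = k \<otimes> \<beta> y \<otimes> inv k"
    using y F_props(2)[OF bF y] unfolding compose_def conjm_def by simp
qed

lemma clQ: "\<And>g x. g \<in> Q \<Longrightarrow> x \<in> Q \<Longrightarrow> g \<otimes> x \<otimes> inv g \<in> Q"
  using sgQ by (simp add: subgroup.m_closed subgroup.m_inv_closed)

lemma I_normal: "AutX G Q Q \<lhd> AutFgrp F Q" using Inn_normal[OF sgQ] .

lemma pi_ghom: "group_hom (AutFgrp F Q) (AutFgrp F Q Mod AutX G Q Q) (\<lambda>x. AutX G Q Q #>\<^bsub>AutFgrp F Q\<^esub> x)"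
  unfolding group_hom_def group_hom_axioms_def
  using group_AutF[OF sgQ] normal.factorgroup_is_group[OF I_normal] normal.r_coset_hom_Mod[OF I_normal]
  by simp

lemma OutS_sub: "OutS G F Q \<subseteq> carrier (AutFgrp F Q Mod AutX G Q Q)"
  unfolding OutS_def using group_hom.hom_closed[OF pi_ghom] AS_sub by fastforce

lemma H2_group: "group ((OutFgrp G F Q)\<lparr>carrier := normalizer (OutFgrp G F Q) (OutS G F Q)\<rparr>)"
  unfolding OutFgrp_def
  using group.subgroup_imp_group[OF normal.factorgroup_is_group[OF I_normal]
      group.normalizer_imp_subgroup[OF normal.factorgroup_is_group[OF I_normal] OutS_sub]] .

lemma h2_ghom: "group_hom (AutFgrp F (carrier G))
   ((OutFgrp G F Q)\<lparr>carrier := normalizer (OutFgrp G F Q) (OutS G F Q)\<rparr>)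
   (\<lambda>\<alpha>. AutX G Q Q #>\<^bsub>AutFgrp F Q\<^esub> restrict \<alpha> Q)"
proof -
  interpret r: group_hom "AutFgrp F (carrier G)" "AutFgrp F Q" "\<lambda>\<alpha>. restrict \<alpha> Q" by (rule r_ghom)
  interpret pi: group_hom "AutFgrp F Q" "AutFgrp F Q Mod AutX G Q Q" "\<lambda>x. AutX G Q Q #>\<^bsub>AutFgrp F Q\<^esub> x"
    by (rule pi_ghom)
  have h: "(\<lambda>\<alpha>. AutX G Q Q #>\<^bsub>AutFgrp F Q\<^esub> restrict \<alpha> Q) \<in> hom (AutFgrp F (carrier G))
     ((OutFgrp G F Q)\<lparr>carrier := normalizer (OutFgrp G F Q) (OutS G F Q)\<rparr>)"
  proof (rule homI)
    fix x assume "x \<in> carrier (AutFgrp F (carrier G))"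
    hence x: "x \<in> F (carrier G) (carrier G)" by simp
    have "AutX G Q Q #>\<^bsub>AutFgrp F Q\<^esub> restrict x Q \<in> normalizer (AutFgrp F Q Mod AutX G Q Q)
       ((\<lambda>a. AutX G Q Q #>\<^bsub>AutFgrp F Q\<^esub> a) ` AutX G (carrier G) Q)"
      using norm_img[OF pi_ghom _ restr_norm[OF x]] AS_sub by simp
    thus "AutX G Q Q #>\<^bsub>AutFgrp F Q\<^esub> restrict x Q
      \<in> carrier ((OutFgrp G F Q)\<lparr>carrier := normalizer (OutFgrp G F Q) (OutS G F Q)\<rparr>)"
      unfolding OutFgrp_def OutS_def by simp
  next
    fix x y assume x: "x \<in> carrier (AutFgrp F (carrier G))" and y: "y \<in> carrier (AutFgrp F (carrier G))"
    have "AutX G Q Q #>\<^bsub>AutFgrp F Q\<^esub> restrict (x \<otimes>\<^bsub>AutFgrp F (carrier G)\<^esub> y) Q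
       = (AutX G Q Q #>\<^bsub>AutFgrp F Q\<^esub> restrict x Q) \<otimes>\<^bsub>AutFgrp F Q Mod AutX G Q Q\<^esub>
         (AutX G Q Q #>\<^bsub>AutFgrp F Q\<^esub> restrict y Q)"
      using r.hom_mult[OF x y] pi.hom_mult[OF r.hom_closed[OF x] r.hom_closed[OF y]] by simp
    thus "AutX G Q Q #>\<^bsub>AutFgrp F Q\<^esub> restrict (x \<otimes>\<^bsub>AutFgrp F (carrier G)\<^esub> y) Q
       = (AutX G Q Q #>\<^bsub>AutFgrp F Q\<^esub> restrict x Q) \<otimes>\<^bsub>(OutFgrp G F Q)\<lparr>carrier := normalizer (OutFgrp G F Q) (OutS G F Q)\<rparr>\<^esub>
         (AutX G Q Q #>\<^bsub>AutFgrp F Q\<^esub> restrict y Q)"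
      unfolding OutFgrp_def by simp
  qed
  show ?thesis
    unfolding group_hom_def group_hom_axioms_def
    using group_AutF[OF sgS] H2_group h by simp
qed

end

context lem22 begin

lemma I_sub: "subgroup (AutX G Q Q) (AutFgrp F Q)" using normal.axioms(1)[OF I_normal] .

lemma h2_image: "(\<lambda>\<alpha>. AutX G Q Q #>\<^bsub>AutFgrp F Q\<^esub> restrict \<alpha> Q) ` F (carrier G) (carrier G)
   = normalizer (OutFgrp G F Q) (OutS G F Q)"
proof
  show "(\<lambda>\<alpha>. AutX G Q Q #>\<^bsub>AutFgrp F Q\<^esub> restrict \<alpha> Q) ` F (carrier G) (carrier G)
     \<subseteq> normalizer (OutFgrp G F Q) (OutS G F Q)"
    using group_hom.hom_closed[OF h2_ghom] by force
next
  show "normalizer (OutFgrp G F Q) (OutS G F Q)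
    \<subseteq> (\<lambda>\<alpha>. AutX G Q Q #>\<^bsub>AutFgrp F Q\<^esub> restrict \<alpha> Q) ` F (carrier G) (carrier G)"
  proof
    fix XX assume XX: "XX \<in> normalizer (OutFgrp G F Q) (OutS G F Q)"
    hence "XX \<in> carrier (AutFgrp F Q Mod AutX G Q Q)"
      unfolding normalizer_def stabilizer_def OutFgrp_def by simp
    then obtain \<beta> where bF: "\<beta> \<in> F Q Q" and Xb: "XX = AutX G Q Q #>\<^bsub>AutFgrp F Q\<^esub> \<beta>"
      unfolding FactGroup_def RCOSETS_def by auto
    have nn: "AutX G Q Q #>\<^bsub>AutFgrp F Q\<^esub> \<beta> \<in> normalizer (AutFgrp F Q Mod AutX G Q Q)
       ((\<lambda>a. AutX G Q Q #>\<^bsub>AutFgrp F Q\<^esub> a) ` AutX G (carrier G) Q)"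
      using XX Xb unfolding OutFgrp_def OutS_def by simp
    have cond: "\<exists>h \<in> carrier G. \<forall>y \<in> Q. \<beta> (g \<otimes> y \<otimes> inv g) = h \<otimes> \<beta> y \<otimes> inv h"
      if g: "g \<in> carrier G" for g
    proof -
      interpret B: group "AutFgrp F Q" by (rule group_AutF[OF sgQ])
      have a: "conjm G g Q \<in> AutX G (carrier G) Q" unfolding AutX_def using g by blast
      obtain a' where a': "a' \<in> AutX G (carrier G) Q"
        "AutX G Q Q #>\<^bsub>AutFgrp F Q\<^esub> (\<beta> \<otimes>\<^bsub>AutFgrp F Q\<^esub> conjm G g Q \<otimes>\<^bsub>AutFgrp F Q\<^esub> inv\<^bsub>AutFgrp F Q\<^esub> \<beta>)
         = AutX G Q Q #>\<^bsub>AutFgrp F Q\<^esub> a'"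
        using norm_img2[OF pi_ghom _ _ nn a] AS_sub bF by auto
      obtain h where h: "h \<in> carrier G" "a' = conjm G h Q" using a'(1) unfolding AutX_def by blast
      let ?x = "\<beta> \<otimes>\<^bsub>AutFgrp F Q\<^esub> conjm G g Q \<otimes>\<^bsub>AutFgrp F Q\<^esub> inv\<^bsub>AutFgrp F Q\<^esub> \<beta>"
      have xc: "?x \<in> carrier (AutFgrp F Q)"
        by (intro B.m_closed B.inv_closed) (simp_all add: bF conjQ_F[OF g])
      have "?x \<in> AutX G Q Q #>\<^bsub>AutFgrp F Q\<^esub> a'" using B.rcos_self[OF xc I_sub] a'(2) by simp
      then obtain i where i: "i \<in> AutX G Q Q" "?x = i \<otimes>\<^bsub>AutFgrp F Q\<^esub> a'"
        unfolding r_coset_def by blast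
      obtain q where q: "q \<in> Q" "i = conjm G q Q" using i(1) unfolding AutX_def by blast
      have qc: "q \<in> carrier G" using Qc[OF q(1)] .
      have "?x = compose Q (conjm G q Q) (conjm G h Q)"
        using i(2) q(2) h(2) AutF_mult[OF conjQ_F[OF qc] conjQ_F[OF h(1)]] by simp
      also have "\<dots> = conjm G (q \<otimes> h) Q" using conjm_compose[OF sgQ qc h(1) conj_Q[OF h(1)]] .
      finally have "?x = conjm G (q \<otimes> h) Q" .
      from conj_to_cond[OF bF g _ this] show ?thesis using qc h(1) by blast
    qed
    obtain \<alpha> where "\<alpha> \<in> F (carrier G) (carrier G)" "restrict \<alpha> Q = \<beta>"
      using extend[OF bF cond] by blast
    thus "XX \<in> (\<lambda>\<alpha>. AutX G Q Q #>\<^bsub>AutFgrp F Q\<^esub> restrict \<alpha> Q) ` F (carrier G) (carrier G)"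
      using Xb by blast
  qed
qed

lemma h2_kernel: "kernel (AutFgrp F (carrier G))
   ((OutFgrp G F Q)\<lparr>carrier := normalizer (OutFgrp G F Q) (OutS G F Q)\<rparr>)
   (\<lambda>\<alpha>. AutX G Q Q #>\<^bsub>AutFgrp F Q\<^esub> restrict \<alpha> Q) = AutX G Q (carrier G)"
proof -
  interpret B: group "AutFgrp F Q" by (rule group_AutF[OF sgQ])
  interpret A: group "AutFgrp F (carrier G)" by (rule group_AutF[OF sgS])
  have "{x \<in> F (carrier G) (carrier G). AutX G Q Q #>\<^bsub>AutFgrp F Q\<^esub> restrict x Q = AutX G Q Q}
        = AutX G Q (carrier G)"
  proof
    show "{x \<in> F (carrier G) (carrier G). AutX G Q Q #>\<^bsub>AutFgrp F Q\<^esub> restrict x Q = AutX G Q Q}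
        \<subseteq> AutX G Q (carrier G)"
    proof
      fix \<alpha> assume "\<alpha> \<in> {x \<in> F (carrier G) (carrier G). AutX G Q Q #>\<^bsub>AutFgrp F Q\<^esub> restrict x Q = AutX G Q Q}"
      hence a: "\<alpha> \<in> F (carrier G) (carrier G)" and e: "AutX G Q Q #>\<^bsub>AutFgrp F Q\<^esub> restrict \<alpha> Q = AutX G Q Q"
        by auto
      have "restrict \<alpha> Q \<in> AutX G Q Q"
        using B.coset_join1[OF e _ I_sub] restr_F[OF a] by simp
      then obtain q where q: "q \<in> Q" "restrict \<alpha> Q = conjm G q Q" unfolding AutX_def by blast
      have qc: "q \<in> carrier G" using Qc[OF q(1)] .
      have iqc: "inv q \<in> carrier G" using qc by simp
      have aQ: "\<And>x. x \<in> Q \<Longrightarrow> \<alpha> x \<in> Q" using F_char[OF a] by blast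
      let ?a' = "compose (carrier G) (conjm G (inv q) (carrier G)) \<alpha>"
      have a'F: "?a' \<in> F (carrier G) (carrier G)" using fs_comp[OF a conjS_F[OF iqc]] .
      have "restrict ?a' Q = compose Q (conjm G (inv q) Q) (restrict \<alpha> Q)"
        unfolding compose_def conjm_def
        by (rule restrict_ext) (simp add: Qc aQ F_props(2)[OF a])
      also have "\<dots> = conjm G (inv q \<otimes> q) Q"
        using q(2) conjm_compose[OF sgQ iqc qc conj_Q[OF qc]] by simp
      also have "\<dots> = (\<lambda>x\<in>Q. x)" using qc id_conjm[OF sgQ] by simp
      finally obtain z where z: "z \<in> ZZ G Q" "?a' = conjm G z (carrier G)"
        using kernel_triv[OF a'F] by blast
      have zQ: "z \<in> Q" using z(1) ZZ_sub by blast
      have zc: "z \<in> carrier G" using Qc[OF zQ] .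
      have "compose (carrier G) (conjm G q (carrier G)) ?a' = \<alpha>"
      proof -
        have "compose (carrier G) (conjm G q (carrier G)) ?a'
             = compose (carrier G) (compose (carrier G) (conjm G q (carrier G)) (conjm G (inv q) (carrier G))) \<alpha>"
          using compose_assoc[of \<alpha> "carrier G" "carrier G" "conjm G q (carrier G)" "conjm G (inv q) (carrier G)"]
            F_props(2)[OF a] by (simp add: Pi_iff)
        also have "\<dots> = compose (carrier G) (\<lambda>x\<in>carrier G. x) \<alpha>"
          using conjm_compose[OF sgS qc iqc] id_conjm[OF sgS] qc by simp
        also have "\<dots> = \<alpha>"
          using F_props(1,2)[OF a] by (simp add: compose_Id Pi_iff)
        finally show ?thesis .
      qed
      hence "\<alpha> = conjm G (q \<otimes> z) (carrier G)"
        using z(2) conjm_compose[OF sgS qc zc] by (simp add: zc)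
      moreover have "q \<otimes> z \<in> Q" using subgroup.m_closed[OF sgQ q(1) zQ] .
      ultimately show "\<alpha> \<in> AutX G Q (carrier G)" unfolding AutX_def by blast
    qed
  next
    show "AutX G Q (carrier G) \<subseteq>
      {x \<in> F (carrier G) (carrier G). AutX G Q Q #>\<^bsub>AutFgrp F Q\<^esub> restrict x Q = AutX G Q Q}"
    proof
      fix \<alpha> assume "\<alpha> \<in> AutX G Q (carrier G)"
      then obtain q where q: "q \<in> Q" "\<alpha> = conjm G q (carrier G)" unfolding AutX_def by blast
      have qc: "q \<in> carrier G" using Qc[OF q(1)] .
      have "restrict \<alpha> Q \<in> AutX G Q Q" using q r_conj[OF qc] unfolding AutX_def by blast
      hence "AutX G Q Q #>\<^bsub>AutFgrp F Q\<^esub> restrict \<alpha> Q = AutX G Q Q"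
        using B.coset_join2[OF _ I_sub] conjQ_F[OF qc] q r_conj[OF qc] by simp
      thus "\<alpha> \<in> {x \<in> F (carrier G) (carrier G). AutX G Q Q #>\<^bsub>AutFgrp F Q\<^esub> restrict x Q = AutX G Q Q}"
        using conjS_F[OF qc] q(2) by simp
    qed
  qed
  thus ?thesis unfolding kernel_def OutFgrp_def by (simp add: FactGroup_def)
qed

theorem part2: "(\<lambda>C. the_elem ((\<lambda>\<alpha>. AutX G Q Q #>\<^bsub>AutFgrp F Q\<^esub> restrict \<alpha> Q) ` C))
           \<in> iso (AutFgrp F (carrier G) Mod AutX G Q (carrier G))
                 ((OutFgrp G F Q)\<lparr>carrier := normalizer (OutFgrp G F Q) (OutS G F Q)\<rparr>)"
  using group_hom.FactGroup_iso_set[OF h2_ghom] h2_image h2_kernel by simp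

end

theorem lemma2p2:
  fixes S :: "'a monoid" and p :: nat and Q :: "'a set"
    and F :: "'a set \<Rightarrow> 'a set \<Rightarrow> ('a \<Rightarrow> 'a) set"
  assumes "group S" and "finite (carrier S)" and "Factorial_Ring.prime p"
    and "\<exists>n. card (carrier S) = p ^ n"
    and "subgroup Q S"
    and "\<forall>\<alpha> \<in> auto S. \<alpha> ` Q = Q"
    and "CS S Q = ZZ S Q"
    and "saturated p S F"
  shows "((\<lambda>C. the_elem ((\<lambda>\<alpha>. restrict \<alpha> Q) ` C))
           \<in> iso (AutFgrp F (carrier S) Mod AutX S (ZZ S Q) (carrier S))
                 ((AutFgrp F Q)\<lparr>carrier := normalizer (AutFgrp F Q) (AutX S (carrier S) Q)\<rparr>)
       \<and> (\<lambda>C. the_elem ((\<lambda>\<alpha>. AutX S Q Q #>\<^bsub>AutFgrp F Q\<^esub> restrict \<alpha> Q) ` C))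
           \<in> iso (AutFgrp F (carrier S) Mod AutX S Q (carrier S))
                 ((OutFgrp S F Q)\<lparr>carrier := normalizer (OutFgrp S F Q) (OutS S F Q)\<rparr>))"
proof -
  obtain n where n: "card (carrier S) = p ^ n" using assms(4) by blast
  have fsS: "fusion_system S F" using assms(8) unfolding saturated_def by (elim conjE) assumption
  interpret L: lem22 S F p Q n
    by (rule lem22.intro[OF fsys.intro lem22_axioms.intro]) (use assms n fsS in simp_all)
  show ?thesis using L.part1 L.part2 by simp
qed

end
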